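(* Let $0<\rho<1$ and $c_d\to c\in(0,1]$. For $1\le k\le d$ let $\lambda^k_d(\mathbf{x})=\frac1{d-1}\sum_{i\ne k}\chi_i\big(\frac{x_i}{1-\rho}+\theta_d\sum_{j=1}^dx_j\big)^2$. Then for every $\varepsilon>0$, $\sup_{\mathbf{x}\in F_d}\mathbb{P}^*_k\big(|\lambda^k_d-\frac c{1-\rho}|>\varepsilon\big)\to0$ as $d\to\infty$.
   Context: $\theta_d=\frac{-\rho}{1+(d-2)\rho-(d-1)\rho^2}$. $(\chi_1,\dots,\chi_d)$ are the indicators of a uniformly random subset of $\{1,\dots,d\}$ of size $dc_d$ ($dc_d$ an integer), and $\mathbb{P}^*_k(\cdot)=\mathbb{P}(\cdot\mid\chi_k=1)$. For $\mathbf{x}=(x_1,x_2,\dots)\in\mathbb{R}^\infty$, $\lambda^k_d$ uses its first $d$ coordinates. With $\bar x_d=\frac1{d-2}\sum_{i=3}^dx_i$ and $R_d(\mathbf{x})=\frac1{d-1}\sum_{i=1}^d(x_i-\frac1d\sum_{j=1}^dx_j)^2$, $F_d\subseteq\mathbb{R}^\infty$ is the set of $\mathbf{x}$ such that $|R_d(\mathbf{x})-(1-\rho)|<d^{-1/8}$; $\bar x=\lim_m\bar x_m$ exists and $|\bar x_d-\bar x|<d^{-1/8}$; $\max_{1\le i\le d}|x_i|<d^{1/8}$; $\frac1d\sum_{i=1}^dx_i^2<d^{1/8}$; and $\frac1d\sum_{i=1}^d(\frac{x_i}{1-\rho}+\theta_d\sum_{j=1}^dx_j)^4<d^{1/8}$.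 *)

theory Defs
  imports "HOL-Probability.Probability"
begin

text \<open>Sequences x = (x_1, x_2, ...) in R^infinity are modelled as nat => real;
  index 0 is ignored, coordinates are x 1, x 2, ...\<close>

definition theta :: "real \<Rightarrow> nat \<Rightarrow> real" where
  "theta \<rho> d = - \<rho> / (1 + (real d - 2) * \<rho> - (real d - 1) * \<rho>\<^sup>2)"

definition xbar :: "nat \<Rightarrow> (nat \<Rightarrow> real) \<Rightarrow> real" where
  "xbar d x = (1 / (real d - 2)) * (\<Sum>i=3..d. x i)"

definition Rd :: "nat \<Rightarrow> (nat \<Rightarrow> real) \<Rightarrow> real" where
  "Rd d x = (1 / (real d - 1)) * (\<Sum>i=1..d. (x i - (1 / real d) * (\<Sum>j=1..d. x j))\<^sup>2)"

definition Fset :: "real \<Rightarrow> nat \<Rightarrow> (nat \<Rightarrow> real) set" where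
  "Fset \<rho> d = {x.
      \<bar>Rd d x - (1 - \<rho>)\<bar> < real d powr (-1/8)
    \<and> convergent (\<lambda>m. xbar m x) \<and> \<bar>xbar d x - lim (\<lambda>m. xbar m x)\<bar> < real d powr (-1/8)
    \<and> (\<forall>i\<in>{1..d}. \<bar>x i\<bar> < real d powr (1/8))
    \<and> (1 / real d) * (\<Sum>i=1..d. (x i)\<^sup>2) < real d powr (1/8)
    \<and> (1 / real d) * (\<Sum>i=1..d. (x i / (1 - \<rho>) + theta \<rho> d * (\<Sum>j=1..d. x j)) ^ 4)
        < real d powr (1/8)}"

text \<open>chi_i = indicator of i in the random subset S.\<close>
definition lambda_kd :: "real \<Rightarrow> nat \<Rightarrow> nat \<Rightarrow> (nat \<Rightarrow> real) \<Rightarrow> nat set \<Rightarrow> real" where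
  "lambda_kd \<rho> d k x S = (1 / (real d - 1)) *
     (\<Sum>i\<in>{1..d} - {k}. (if i \<in> S then 1 else 0) *
        (x i / (1 - \<rho>) + theta \<rho> d * (\<Sum>j=1..d. x j))\<^sup>2)"

text \<open>Law of (chi_1..chi_d): uniform random subset of {1..d} of size m.\<close>
definition subset_pmf :: "nat \<Rightarrow> nat \<Rightarrow> nat set pmf" where
  "subset_pmf d m = pmf_of_set {S. S \<subseteq> {1..d} \<and> card S = m}"

definition Pstar :: "nat \<Rightarrow> nat \<Rightarrow> nat \<Rightarrow> nat set pmf" where
  "Pstar d m k = cond_pmf (subset_pmf d m) {S. k \<in> S}"

end

theory Submission imports Defs "HOL-Real_Asymp.Real_Asymp" begin

lemma cond_pmf_of_set:
  assumes "finite U" "U \<inter> E \<noteq> {}"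
  shows "cond_pmf (pmf_of_set U) E = pmf_of_set (U \<inter> E)"
proof (rule pmf_eqI)
  fix x
  have U: "U \<noteq> {}" using assms by auto
  have ne: "set_pmf (pmf_of_set U) \<inter> E \<noteq> {}" using assms U by simp
  have m: "measure (pmf_of_set U) E = real (card (U \<inter> E)) / real (card U)"
    using assms U by (simp add: measure_pmf_of_set)
  have c1: "card U > 0" using U assms by (simp add: card_gt_0_iff)
  have c2: "card (U \<inter> E) > 0" using assms by (simp add: card_gt_0_iff)
  show "pmf (cond_pmf (pmf_of_set U) E) x = pmf (pmf_of_set (U \<inter> E)) x"
    using c1 c2 assms U
    by (simp add: pmf_cond[OF ne] m indicator_def)
qed

lemma count_formula:
  assumes "finite X" "B \<subseteq> X"
  shows "card {S. S \<subseteq> X \<and> card S = m \<and> B \<subseteq> S} =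
     (if card B \<le> m then (card X - card B) choose (m - card B) else 0)"
proof (cases "card B \<le> m")
  case True
  have fB: "finite B" using assms finite_subset by blast
  have "bij_betw (\<lambda>S. S - B) {S. S \<subseteq> X \<and> card S = m \<and> B \<subseteq> S}
        {T. T \<subseteq> X - B \<and> card T = m - card B}"
  proof (rule bij_betwI[where g="\<lambda>T. T \<union> B"])
    show "(\<lambda>S. S - B) \<in> {S. S \<subseteq> X \<and> card S = m \<and> B \<subseteq> S} \<rightarrow> {T. T \<subseteq> X - B \<and> card T = m - card B}"
      using fB by (auto simp: card_Diff_subset)
    show "(\<lambda>T. T \<union> B) \<in> {T. T \<subseteq> X - B \<and> card T = m - card B} \<rightarrow> {S. S \<subseteq> X \<and> card S = m \<and> B \<subseteq> S}"
    proof
      fix T assume T: "T \<in> {T. T \<subseteq> X - B \<and> card T = m - card B}"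
      have fT: "finite T" using T assms finite_subset by blast
      have "card (T \<union> B) = card T + card B"
        using T fT fB by (intro card_Un_disjoint) auto
      then show "T \<union> B \<in> {S. S \<subseteq> X \<and> card S = m \<and> B \<subseteq> S}" using T True assms by auto
    qed
  qed auto
  then have "card {S. S \<subseteq> X \<and> card S = m \<and> B \<subseteq> S} = card {T. T \<subseteq> X - B \<and> card T = m - card B}"
    by (rule bij_betw_same_card)
  also have "\<dots> = card (X - B) choose (m - card B)"
    using assms by (simp add: n_subsets)
  also have "card (X - B) = card X - card B" using assms fB by (simp add: card_Diff_subset)
  finally show ?thesis using True by simp
next
  case False
  have "{S. S \<subseteq> X \<and> card S = m \<and> B \<subseteq> S} = {}"
  proof (rule ccontr)
    assume "{S. S \<subseteq> X \<and> card S = m \<and> B \<subseteq> S} \<noteq> {}"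
    then obtain S where S: "S \<subseteq> X" "card S = m" "B \<subseteq> S" by auto
    then have "card B \<le> card S" using assms by (meson card_mono finite_subset)
    then show False using S False by simp
  qed
  then show ?thesis using False by (metis card.empty)
qed

lemma sampling_bound:
  fixes a :: "nat \<Rightarrow> real" and X :: "nat set" and m :: nat
  assumes fX: "finite X" and kX: "k \<in> X" and tpos: "t > 0"
  assumes V_def: "V = {S. S \<subseteq> X \<and> card S = m \<and> k \<in> S}" and A_def: "A = X - {k}"
    and abar_def: "abar = (\<Sum>i\<in>A. a i) / real (card A)"
  shows "real (card {S\<in>V. \<bar>\<Sum>i\<in>A. (if i\<in>S then a i - abar else 0)\<bar> > t}) * t\<^sup>2
          \<le> real (card V) * (\<Sum>i\<in>A. (a i)\<^sup>2)"
proof -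
  define b where "b i = a i - abar" for i
  define Z where "Z S = (\<Sum>i\<in>A. (if i\<in>S then b i else 0))" for S
  have fA: "finite A" using fX A_def by simp
  have fV: "finite V" unfolding V_def
    by (rule finite_subset[of _ "Pow X"]) (use fX in auto)
  have sb: "(\<Sum>i\<in>A. b i) = 0"
  proof (cases "card A = 0")
    case True then have "A = {}" using fA by simp
    then show ?thesis by simp
  next
    case False
    then show ?thesis by (simp add: b_def sum_subtractf abar_def)
  qed
  have "(\<Sum>i\<in>A. (a i)\<^sup>2) = (\<Sum>i\<in>A. (b i)\<^sup>2 + 2*abar*b i + abar\<^sup>2)"
    by (rule sum.cong) (simp_all add: b_def power2_eq_square algebra_simps)
  also have "\<dots> = (\<Sum>i\<in>A. (b i)\<^sup>2) + 2*abar*(\<Sum>i\<in>A. b i) + real (card A) * abar\<^sup>2"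
    by (simp add: sum.distrib sum_distrib_left)
  finally have sb2: "(\<Sum>i\<in>A. (b i)\<^sup>2) \<le> (\<Sum>i\<in>A. (a i)\<^sup>2)" using sb by simp
  define C where "C n = real (if n \<le> m then (card X - n) choose (m - n) else 0)" for n
  have cnt: "real (card {S\<in>V. i\<in>S \<and> j\<in>S}) = (if i = j then C 2 else C 3)"
    if ij: "i \<in> A" "j \<in> A" for i j
  proof -
    have e: "{S\<in>V. i\<in>S \<and> j\<in>S} = {S. S \<subseteq> X \<and> card S = m \<and> {k,i,j} \<subseteq> S}"
      unfolding V_def by auto
    have c: "card {k,i,j} = (if i = j then 2 else 3)" using ij A_def by auto
    have s: "{k,i,j} \<subseteq> X" using ij A_def kX by auto
    show ?thesis unfolding e count_formula[OF fX s] c C_def by simp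
  qed
  have "(\<Sum>S\<in>V. (Z S)\<^sup>2) = (\<Sum>S\<in>V. \<Sum>i\<in>A. \<Sum>j\<in>A. (if i\<in>S \<and> j\<in>S then b i * b j else 0))"
    unfolding Z_def power2_eq_square sum_product
    by (intro sum.cong refl) auto
  also have "\<dots> = (\<Sum>i\<in>A. \<Sum>j\<in>A. \<Sum>S\<in>V. (if i\<in>S \<and> j\<in>S then b i * b j else 0))"
    by (simp add: sum.swap[of _ V] sum.swap[of _ V A])
  also have "\<dots> = (\<Sum>i\<in>A. \<Sum>j\<in>A. b i * b j * real (card {S\<in>V. i\<in>S \<and> j\<in>S}))"
    by (intro sum.cong refl) (simp add: sum.inter_filter[OF fV, symmetric])
  also have "\<dots> = (\<Sum>i\<in>A. \<Sum>j\<in>A. C 3 * (b i * b j) + (if i = j then (C 2 - C 3) * (b i * b j) else 0))"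
    by (intro sum.cong refl) (simp add: cnt algebra_simps)
  also have "\<dots> = C 3 * (\<Sum>i\<in>A. b i) * (\<Sum>j\<in>A. b j) + (C 2 - C 3) * (\<Sum>i\<in>A. (b i)\<^sup>2)"
  proof -
    have "(\<Sum>i\<in>A. \<Sum>j\<in>A. C 3 * (b i * b j)) = C 3 * ((\<Sum>i\<in>A. b i) * (\<Sum>j\<in>A. b j))"
      by (simp add: mult.assoc[symmetric] sum_distrib_left[symmetric] sb)
    moreover have "(\<Sum>i\<in>A. \<Sum>j\<in>A. (if i = j then (C 2 - C 3) * (b i * b j) else 0)) = (C 2 - C 3) * (\<Sum>i\<in>A. (b i)\<^sup>2)"
      by (simp add: fA sum_distrib_left power2_eq_square)
    ultimately show ?thesis by (simp add: sum.distrib)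
  qed
  also have "\<dots> = (C 2 - C 3) * (\<Sum>i\<in>A. (b i)\<^sup>2)" using sb by simp
  also have "\<dots> \<le> C 2 * (\<Sum>i\<in>A. (b i)\<^sup>2)"
  proof -
    have "C 3 \<ge> 0" by (simp add: C_def)
    moreover have "(\<Sum>i\<in>A. (b i)\<^sup>2) \<ge> 0" by (simp add: sum_nonneg)
    ultimately show ?thesis by (simp add: algebra_simps mult_nonneg_nonneg)
  qed
  also have "\<dots> \<le> real (card V) * (\<Sum>i\<in>A. (b i)\<^sup>2)"
  proof (cases "A = {}")
    case True then show ?thesis by simp
  next
    case False
    then obtain i where i: "i \<in> A" by auto
    have "C 2 = real (card {S\<in>V. i\<in>S \<and> i\<in>S})" using cnt[OF i i] by simp
    also have "\<dots> \<le> real (card V)" using fV by (intro of_nat_mono card_mono) auto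
    finally show ?thesis by (intro mult_right_mono) (simp_all add: sum_nonneg)
  qed
  also have "\<dots> \<le> real (card V) * (\<Sum>i\<in>A. (a i)\<^sup>2)"
    using sb2 by (intro mult_left_mono) simp_all
  finally have tot: "(\<Sum>S\<in>V. (Z S)\<^sup>2) \<le> real (card V) * (\<Sum>i\<in>A. (a i)\<^sup>2)" .
  let ?Q = "{S\<in>V. \<bar>Z S\<bar> > t}"
  have "real (card ?Q) * t\<^sup>2 = (\<Sum>S\<in>?Q. t\<^sup>2)" by simp
  also have "\<dots> \<le> (\<Sum>S\<in>?Q. (Z S)\<^sup>2)"
  proof (rule sum_mono)
    fix S assume "S \<in> ?Q"
    then have "t < \<bar>Z S\<bar>" by simp
    then have "t\<^sup>2 < \<bar>Z S\<bar>\<^sup>2" using tpos by (intro power_strict_mono) auto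
    then show "t\<^sup>2 \<le> (Z S)\<^sup>2" by simp
  qed
  also have "\<dots> \<le> (\<Sum>S\<in>V. (Z S)\<^sup>2)" using fV by (intro sum_mono2) auto
  finally have "real (card ?Q) * t\<^sup>2 \<le> real (card V) * (\<Sum>i\<in>A. (a i)\<^sup>2)" using tot by linarith
  then show ?thesis unfolding Z_def b_def .
qed

lemma det_bound:
  fixes x :: "nat \<Rightarrow> real" and \<rho> :: real and d k :: nat
  assumes r0: "0 < \<rho>" and r1: "\<rho> < 1" and d2: "d \<ge> 2" and kd: "k \<in> {1..d}"
    and xF: "x \<in> Fset \<rho> d"
  defines "y \<equiv> \<lambda>i. x i / (1 - \<rho>) + theta \<rho> d * (\<Sum>j=1..d. x j)"
  shows "(\<Sum>i=1..d. (y i)^4) < real d * real d powr (1/8)"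
    and "\<bar>(\<Sum>i\<in>{1..d}-{k}. (y i)\<^sup>2) / (real d - 1) - 1/(1-\<rho>)\<bar>
          \<le> real d powr (-1/8) / (1-\<rho>)\<^sup>2 + (real d * real d powr (1/8) / (1 + (real d - 1)*\<rho>)\<^sup>2
               + sqrt (real d * real d powr (1/8))) / (real d - 1)"
proof -
  have dpos: "real d > 0" "real d - 1 > 0" using d2 by auto
  have F: "\<bar>Rd d x - (1 - \<rho>)\<bar> < real d powr (-1/8)"
     "(1 / real d) * (\<Sum>i=1..d. (x i)\<^sup>2) < real d powr (1/8)"
     "(1 / real d) * (\<Sum>i=1..d. (y i) ^ 4) < real d powr (1/8)"
    using xF unfolding Fset_def y_def by auto
  show y4: "(\<Sum>i=1..d. (y i)^4) < real d * real d powr (1/8)"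
    using F(3) dpos by (simp add: field_simps)
  define \<mu> where "\<mu> = (1 / real d) * (\<Sum>j=1..d. x j)"
  define s where "s = 1 / (1 + (real d - 1)*\<rho>)"
  have sp: "1 + (real d - 1)*\<rho> > 0" using dpos r0 by (simp add: add_pos_nonneg)
  have Deq: "1 + (real d - 2) * \<rho> - (real d - 1) * \<rho>\<^sup>2 = (1 - \<rho>) * (1 + (real d - 1)*\<rho>)"
    by (simp add: algebra_simps power2_eq_square)
  have th: "theta \<rho> d * (\<Sum>j=1..d. x j) = \<mu> * s - \<mu> / (1 - \<rho>)"
  proof -
    have "(\<Sum>j=1..d. x j) = real d * \<mu>" using dpos by (simp add: \<mu>_def)
    then show ?thesis unfolding theta_def Deq s_def using sp r1 dpos
      by (simp add: field_simps)
  qed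
  have yeq: "y i = (x i - \<mu>) / (1 - \<rho>) + \<mu> * s" for i
    unfolding y_def th diff_divide_distrib by simp
  have sxm: "(\<Sum>i=1..d. (x i - \<mu>)) = 0"
    using dpos by (simp add: sum_subtractf \<mu>_def)
  have "(\<Sum>i=1..d. (y i)\<^sup>2) = (\<Sum>i=1..d. (x i - \<mu>)\<^sup>2 / (1-\<rho>)\<^sup>2 + (2 * \<mu> * s / (1 - \<rho>)) * (x i - \<mu>) + \<mu>\<^sup>2 * s\<^sup>2)"
    unfolding yeq by (rule sum.cong) (simp_all add: power2_sum power_divide mult.commute mult.left_commute power_mult_distrib)
  also have "\<dots> = (\<Sum>i=1..d. (x i - \<mu>)\<^sup>2) / (1-\<rho>)\<^sup>2 + (2 * \<mu> * s / (1 - \<rho>)) * (\<Sum>i=1..d. (x i - \<mu>)) + real d * \<mu>\<^sup>2 * s\<^sup>2"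
    by (simp add: sum.distrib sum_distrib_left sum_divide_distrib)
  finally have ys: "(\<Sum>i=1..d. (y i)\<^sup>2) = (real d - 1) * Rd d x / (1-\<rho>)\<^sup>2 + real d * \<mu>\<^sup>2 * s\<^sup>2"
    using sxm dpos unfolding Rd_def \<mu>_def by simp
  have "(\<Sum>i=1..d. (x i)\<^sup>2) = (\<Sum>i=1..d. (x i - \<mu>)\<^sup>2 + 2*\<mu>*(x i - \<mu>) + \<mu>\<^sup>2)"
    by (rule sum.cong) (simp_all add: power2_eq_square algebra_simps)
  also have "\<dots> = (\<Sum>i=1..d. (x i - \<mu>)\<^sup>2) + 2*\<mu>*(\<Sum>i=1..d. (x i - \<mu>)) + real d * \<mu>\<^sup>2"
    by (simp add: sum.distrib sum_distrib_left)
  finally have "real d * \<mu>\<^sup>2 \<le> (\<Sum>i=1..d. (x i)\<^sup>2)" using sxm by (simp add: sum_nonneg)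
  also have "\<dots> < real d * real d powr (1/8)" using F(2) dpos by (simp add: field_simps)
  finally have mu2: "real d * \<mu>\<^sup>2 < real d * real d powr (1/8)" .
  have ms: "real d * \<mu>\<^sup>2 * s\<^sup>2 \<le> real d * real d powr (1/8) / (1 + (real d - 1)*\<rho>)\<^sup>2"
  proof -
    have "real d * \<mu>\<^sup>2 * s\<^sup>2 = real d * \<mu>\<^sup>2 / (1 + (real d - 1)*\<rho>)\<^sup>2"
      unfolding s_def by (simp add: power_divide)
    also have "\<dots> \<le> real d * real d powr (1/8) / (1 + (real d - 1)*\<rho>)\<^sup>2"
      using mu2 by (intro divide_right_mono) auto
    finally show ?thesis .
  qed
  have "(y k)^4 \<le> (\<Sum>i=1..d. (y i)^4)"
    using kd by (intro member_le_sum) auto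
  then have "sqrt ((y k)^4) \<le> sqrt (real d * real d powr (1/8))"
    using y4 by (intro real_sqrt_le_mono) simp
  moreover have "sqrt ((y k)^4) = (y k)\<^sup>2"
    by (metis abs_of_nonneg real_sqrt_abs zero_le_power2 power2_eq_square power_mult_distrib
        numeral_Bit0 power_add power_one_right mult_2 power2_abs  real_sqrt_mult_self)
  ultimately have yk: "(y k)\<^sup>2 \<le> sqrt (real d * real d powr (1/8))" by simp
  have "(\<Sum>i\<in>{1..d}-{k}. (y i)\<^sup>2) = (\<Sum>i=1..d. (y i)\<^sup>2) - (y k)\<^sup>2"
    using kd by (simp add: sum_diff1)
  then have "(\<Sum>i\<in>{1..d}-{k}. (y i)\<^sup>2) / (real d - 1) - 1/(1-\<rho>)
      = (Rd d x - (1-\<rho>)) / (1-\<rho>)\<^sup>2 + (real d * \<mu>\<^sup>2 * s\<^sup>2 - (y k)\<^sup>2) / (real d - 1)"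
  proof -
    have gen: "((n*R/c\<^sup>2 + W) - Y)/n - 1/c = (R - c)/c\<^sup>2 + (W - Y)/n"
      if "n > 0" "c > 0" for n c R W Y :: real
      using that by (simp add: field_simps power2_eq_square)
    show ?thesis unfolding \<open>(\<Sum>i\<in>{1..d}-{k}. (y i)\<^sup>2) = _\<close> ys
      using gen[of "real d - 1" "1 - \<rho>"] dpos r1 by simp
  qed
  also have "\<bar>\<dots>\<bar> \<le> \<bar>Rd d x - (1-\<rho>)\<bar> / (1-\<rho>)\<^sup>2 + (real d * \<mu>\<^sup>2 * s\<^sup>2 + (y k)\<^sup>2) / (real d - 1)"
  proof -
    have "\<bar>real d * \<mu>\<^sup>2 * s\<^sup>2 - (y k)\<^sup>2\<bar> \<le> real d * \<mu>\<^sup>2 * s\<^sup>2 + (y k)\<^sup>2"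
      using dpos by (intro abs_leI) (simp_all add: add_nonneg_nonneg)
    then have "\<bar>(real d * \<mu>\<^sup>2 * s\<^sup>2 - (y k)\<^sup>2) / (real d - 1)\<bar> \<le> (real d * \<mu>\<^sup>2 * s\<^sup>2 + (y k)\<^sup>2) / (real d - 1)"
      using dpos by (simp add: abs_div divide_right_mono)
    moreover have h2: "\<bar>(Rd d x - (1-\<rho>)) / (1-\<rho>)\<^sup>2\<bar> = \<bar>Rd d x - (1-\<rho>)\<bar> / (1-\<rho>)\<^sup>2"
      by (simp add: abs_div)
    moreover have h3: "\<bar>(Rd d x - (1-\<rho>)) / (1-\<rho>)\<^sup>2 + (real d * \<mu>\<^sup>2 * s\<^sup>2 - (y k)\<^sup>2) / (real d - 1)\<bar>
       \<le> \<bar>(Rd d x - (1-\<rho>)) / (1-\<rho>)\<^sup>2\<bar> + \<bar>(real d * \<mu>\<^sup>2 * s\<^sup>2 - (y k)\<^sup>2) / (real d - 1)\<bar>"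
      by (rule abs_triangle_ineq)
    moreover have gen: "\<And>p q P Q :: real. \<bar>p\<bar> = P \<Longrightarrow> \<bar>q\<bar> \<le> Q \<Longrightarrow> \<bar>p + q\<bar> \<le> P + Q"
      by (auto simp: abs_if split: if_splits)
    ultimately show ?thesis by blast
  qed
  also have "\<dots> \<le> real d powr (-1/8) / (1-\<rho>)\<^sup>2 + (real d * real d powr (1/8) / (1 + (real d - 1)*\<rho>)\<^sup>2
               + sqrt (real d * real d powr (1/8))) / (real d - 1)"
  proof -
    have "\<bar>Rd d x - (1-\<rho>)\<bar> / (1-\<rho>)\<^sup>2 \<le> real d powr (-1/8) / (1-\<rho>)\<^sup>2"
      using F(1) r1 by (intro divide_right_mono) auto
    moreover have "(real d * \<mu>\<^sup>2 * s\<^sup>2 + (y k)\<^sup>2) / (real d - 1) \<le> (real d * real d powr (1/8) / (1 + (real d - 1)*\<rho>)\<^sup>2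
               + sqrt (real d * real d powr (1/8))) / (real d - 1)"
      using ms yk dpos by (intro divide_right_mono) auto
    ultimately show ?thesis by linarith
  qed
  finally show "\<bar>(\<Sum>i\<in>{1..d}-{k}. (y i)\<^sup>2) / (real d - 1) - 1/(1-\<rho>)\<bar>
          \<le> real d powr (-1/8) / (1-\<rho>)\<^sup>2 + (real d * real d powr (1/8) / (1 + (real d - 1)*\<rho>)\<^sup>2
               + sqrt (real d * real d powr (1/8))) / (real d - 1)" .
qed


theorem lemmaA14:
  fixes \<rho> c :: real and cd :: "nat \<Rightarrow> real" and k :: nat
  assumes "0 < \<rho>" and "\<rho> < 1"
    and "\<forall>d. real d * cd d \<in> \<nat> \<and> real d * cd d \<le> real d"
    and "cd \<longlonglongrightarrow> c" and "0 < c" and "c \<le> 1"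
    and "1 \<le> k"
  shows "\<forall>\<epsilon>>0. (\<lambda>d. \<Squnion>x\<in>Fset \<rho> d.
            emeasure (measure_pmf (Pstar d (nat \<lfloor>real d * cd d\<rfloor>) k))
              {S. \<bar>lambda_kd \<rho> d k x S - c / (1 - \<rho>)\<bar> > \<epsilon>}) \<longlonglongrightarrow> 0"
proof (intro allI impI)
  fix \<epsilon> :: real assume ep: "\<epsilon> > 0"
  note r0 = assms(1) and r1 = assms(2)
  define m where "m d = nat \<lfloor>real d * cd d\<rfloor>" for d
  have mreal: "real (m d) = real d * cd d" for d
  proof -
    have "real d * cd d \<in> \<nat>" using assms(3) by blast
    then obtain n where n: "real d * cd d = real n" by (auto elim: Nats_cases)
    then show ?thesis unfolding m_def by simp
  qed
  have mle: "m d \<le> d" for d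
    using mreal[of d] assms(3) by (metis of_nat_le_iff)
  define g where "g d = real d powr (-1/8) / (1-\<rho>)\<^sup>2 + (real d * real d powr (1/8) / (1 + (real d - 1)*\<rho>)\<^sup>2
               + sqrt (real d * real d powr (1/8))) / (real d - 1)" for d :: nat
  define q where "q d = (real (m d) - 1) / (real d - 1)" for d
  define u where "u d = 4 * (real d * real d powr (1/8)) / ((real d - 1)\<^sup>2 * \<epsilon>\<^sup>2)" for d :: nat
  have g0: "g \<longlonglongrightarrow> 0" unfolding g_def using r0 r1 by real_asymp
  have u0: "u \<longlonglongrightarrow> 0" unfolding u_def using ep by real_asymp
  have qeq: "q d = cd d * (real d / (real d - 1)) - 1 / (real d - 1)" for d
    unfolding q_def mreal by (simp add: diff_divide_distrib)
  have l1: "(\<lambda>d::nat. real d / (real d - 1)) \<longlonglongrightarrow> 1" by real_asymp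
  have l2: "(\<lambda>d::nat. 1 / (real d - 1)) \<longlonglongrightarrow> 0" by real_asymp
  have q0: "q \<longlonglongrightarrow> c"
    unfolding qeq using tendsto_diff[OF tendsto_mult[OF assms(4) l1] l2] by simp
  have h0: "(\<lambda>d. g d + \<bar>q d - c\<bar> / (1 - \<rho>)) \<longlonglongrightarrow> 0"
  proof -
    have "(\<lambda>d. \<bar>q d - c\<bar>) \<longlonglongrightarrow> \<bar>c - c\<bar>" by (intro tendsto_intros q0)
    then have "(\<lambda>d. \<bar>q d - c\<bar> / (1 - \<rho>)) \<longlonglongrightarrow> \<bar>c - c\<bar> / (1 - \<rho>)"
      by (rule tendsto_divide[OF _ tendsto_const]) (use r1 in auto)
    then have "(\<lambda>d. g d + \<bar>q d - c\<bar> / (1 - \<rho>)) \<longlonglongrightarrow> 0 + \<bar>c - c\<bar> / (1 - \<rho>)"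
      by (rule tendsto_add[OF g0])
    then show ?thesis by simp
  qed
  have ev: "eventually (\<lambda>d. d \<ge> max k 2 \<and> cd d > 0 \<and> g d + \<bar>q d - c\<bar> / (1 - \<rho>) < \<epsilon>/2) sequentially"
    using eventually_ge_at_top[of "max k 2"] order_tendstoD(1)[OF assms(4) assms(5)]
      order_tendstoD(2)[OF h0 half_gt_zero[OF ep]]
    by eventually_elim auto
  have bound: "(\<Squnion>x\<in>Fset \<rho> d.
            emeasure (measure_pmf (Pstar d (nat \<lfloor>real d * cd d\<rfloor>) k))
              {S. \<bar>lambda_kd \<rho> d k x S - c / (1 - \<rho>)\<bar> > \<epsilon>}) \<le> ennreal (u d)"
    if dd: "d \<ge> max k 2" "cd d > 0" "g d + \<bar>q d - c\<bar> / (1 - \<rho>) < \<epsilon>/2" for d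
  proof (rule SUP_least)
    fix x assume xF: "x \<in> Fset \<rho> d"
    define X where "X = {1..d}"
    define V where "V = {S. S \<subseteq> X \<and> card S = m d \<and> k \<in> S}"
    define A where "A = X - {k}"
    define y where "y i = x i / (1 - \<rho>) + theta \<rho> d * (\<Sum>j=1..d. x j)" for i
    define a where "a i = (y i)\<^sup>2" for i
    define abar where "abar = (\<Sum>i\<in>A. a i) / real (card A)"
    define t where "t = (real d - 1) * \<epsilon> / 2"
    have d2: "d \<ge> 2" and kd: "k \<in> X" using dd assms(7) by (auto simp: X_def)
    have dpos: "real d - 1 > 0" using d2 by simp
    have tpos: "t > 0" using dpos ep by (simp add: t_def)
    have fX: "finite X" by (simp add: X_def)
    have m1: "m d \<ge> 1"
    proof -
      have "real (m d) > 0" using mreal[of d] dd d2 by simp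
      then show ?thesis by simp
    qed
    have cA: "real (card A) = real d - 1" using kd d2 by (simp add: A_def X_def)
    have cV: "card V = (d - 1) choose (m d - 1)"
    proof -
      have "V = {S. S \<subseteq> X \<and> card S = m d \<and> {k} \<subseteq> S}" by (auto simp: V_def)
      then show ?thesis using count_formula[OF fX, of "{k}" "m d"] kd m1 by (simp add: X_def)
    qed
    have Vpos: "card V > 0" unfolding cV using mle[of d] m1 by simp
    have fV: "finite V" using Vpos card_gt_0_iff by blast
    have Vne: "V \<noteq> {}" using Vpos by auto
    have P: "Pstar d (nat \<lfloor>real d * cd d\<rfloor>) k = pmf_of_set V"
    proof -
      have e: "{S. S \<subseteq> {1..d} \<and> card S = m d} \<inter> {S. k \<in> S} = V" by (auto simp: V_def X_def)
      have fU: "finite {S. S \<subseteq> {1..d} \<and> card S = m d}"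
        by (rule finite_subset[of _ "Pow {1..d}"]) auto
      show ?thesis unfolding Pstar_def subset_pmf_def m_def[symmetric]
        using cond_pmf_of_set[OF fU, of "{S. k \<in> S}"] e Vne by simp
    qed
    define Q where "Q = {S. \<bar>lambda_kd \<rho> d k x S - c / (1 - \<rho>)\<bar> > \<epsilon>}"
    have DB: "\<bar>abar - 1/(1-\<rho>)\<bar> \<le> g d"
      using det_bound(2)[OF r0 r1 d2 _ xF, of k] kd unfolding abar_def cA a_def A_def X_def g_def y_def
      by simp
    have q01: "0 \<le> q d" "q d \<le> 1"
      using m1 mle[of d] dpos unfolding q_def by (auto simp: field_simps)
    have near: "\<bar>q d * abar - c/(1-\<rho>)\<bar> < \<epsilon>/2"
    proof -
      have "q d * abar - c/(1-\<rho>) = q d * (abar - 1/(1-\<rho>)) + (q d - c)/(1-\<rho>)"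
        by (simp add: algebra_simps diff_divide_distrib)
      also have "\<bar>\<dots>\<bar> \<le> \<bar>q d * (abar - 1/(1-\<rho>))\<bar> + \<bar>(q d - c)/(1-\<rho>)\<bar>" by (rule abs_triangle_ineq)
      also have "\<bar>q d * (abar - 1/(1-\<rho>))\<bar> \<le> g d"
      proof -
        have "\<bar>q d * (abar - 1/(1-\<rho>))\<bar> = q d * \<bar>abar - 1/(1-\<rho>)\<bar>" using q01 by (simp add: abs_mult)
        also have "\<dots> \<le> 1 * g d" using q01 DB by (intro mult_mono) auto
        finally show ?thesis by simp
      qed
      also have "\<bar>(q d - c)/(1-\<rho>)\<bar> = \<bar>q d - c\<bar>/(1-\<rho>)" using r1 by (simp add: abs_div)
      finally have "\<bar>q d * abar - c/(1-\<rho>)\<bar> \<le> g d + \<bar>q d - c\<bar>/(1-\<rho>)" by simp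
      then show ?thesis using dd(3) by linarith
    qed
    have lam: "lambda_kd \<rho> d k x S = (\<Sum>i\<in>A. (if i\<in>S then a i - abar else 0)) / (real d - 1) + q d * abar"
      if S: "S \<in> V" for S
    proof -
      have "(\<Sum>i\<in>A. (if i \<in> S then 1 else 0) * a i) = (\<Sum>i\<in>A. (if i\<in>S then a i - abar else 0) + (if i \<in> S then abar else 0))"
        by (rule sum.cong) auto
      also have "\<dots> = (\<Sum>i\<in>A. (if i\<in>S then a i - abar else 0)) + abar * real (card (A \<inter> S))"
        using fX by (simp add: sum.distrib sum.If_cases A_def)
      also have "card (A \<inter> S) = m d - 1"
      proof -
        have "A \<inter> S = S - {k}" using S by (auto simp: A_def V_def)
        then show ?thesis using S fX by (auto simp: V_def intro: finite_subset)
      qed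
      finally have W: "(\<Sum>i\<in>A. (if i \<in> S then 1 else 0) * a i) = (\<Sum>i\<in>A. (if i\<in>S then a i - abar else 0)) + abar * (real (m d) - 1)"
        using m1 by (simp add: of_nat_diff)
      have lk: "lambda_kd \<rho> d k x S = (\<Sum>i\<in>A. (if i \<in> S then 1 else 0) * a i) / (real d - 1)"
        unfolding lambda_kd_def a_def y_def A_def X_def by simp
      show ?thesis unfolding lk W q_def by (simp add: add_divide_distrib)

    qed
    have sub: "V \<inter> Q \<subseteq> {S\<in>V. \<bar>\<Sum>i\<in>A. (if i\<in>S then a i - abar else 0)\<bar> > t}"
    proof
      fix S assume S: "S \<in> V \<inter> Q"
      define Z where "Z = (\<Sum>i\<in>A. (if i\<in>S then a i - abar else 0))"
      have "\<epsilon> < \<bar>Z / (real d - 1) + (q d * abar - c/(1-\<rho>))\<bar>"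
        using S lam[of S] unfolding Q_def Z_def by (simp add: algebra_simps)
      also have "\<dots> \<le> \<bar>Z / (real d - 1)\<bar> + \<bar>q d * abar - c/(1-\<rho>)\<bar>" by (rule abs_triangle_ineq)
      finally have "\<epsilon> < \<bar>Z\<bar> / (real d - 1) + \<bar>q d * abar - c/(1-\<rho>)\<bar>" using dpos by (simp add: abs_div)
      then have "\<epsilon>/2 < \<bar>Z\<bar> / (real d - 1)" using near by linarith
      then have "t < \<bar>Z\<bar>" using dpos unfolding t_def by (simp add: field_simps)
      then show "S \<in> {S\<in>V. \<bar>\<Sum>i\<in>A. (if i\<in>S then a i - abar else 0)\<bar> > t}" using S Z_def by simp
    qed
    have SB: "real (card {S\<in>V. \<bar>\<Sum>i\<in>A. (if i\<in>S then a i - abar else 0)\<bar> > t}) * t\<^sup>2 \<le> real (card V) * (\<Sum>i\<in>A. (a i)\<^sup>2)"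
      by (rule sampling_bound[OF fX kd tpos V_def A_def abar_def])
    have a4: "(\<Sum>i\<in>A. (a i)\<^sup>2) \<le> real d * real d powr (1/8)"
    proof -
      have e4: "((y i)\<^sup>2)\<^sup>2 = (y i)^4" for i by (simp add: power_mult[symmetric])
      have "(\<Sum>i\<in>A. (a i)\<^sup>2) = (\<Sum>i\<in>A. (y i)^4)" unfolding a_def e4 ..
      also have "\<dots> \<le> (\<Sum>i\<in>X. (y i)^4)"
        unfolding A_def using fX by (intro sum_mono2) auto
      also have "\<dots> < real d * real d powr (1/8)"
        using det_bound(1)[OF r0 r1 d2 _ xF, of k] kd unfolding X_def y_def by simp
      finally show ?thesis by simp
    qed
    have "real (card (V \<inter> Q)) * t\<^sup>2 \<le> real (card V) * (real d * real d powr (1/8))"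
    proof -
      have "card (V \<inter> Q) \<le> card {S\<in>V. \<bar>\<Sum>i\<in>A. (if i\<in>S then a i - abar else 0)\<bar> > t}"
        using sub fV by (intro card_mono) auto
      then have "real (card (V \<inter> Q)) * t\<^sup>2 \<le> real (card {S\<in>V. \<bar>\<Sum>i\<in>A. (if i\<in>S then a i - abar else 0)\<bar> > t}) * t\<^sup>2"
        by (intro mult_right_mono) auto
      also note SB
      also have "real (card V) * (\<Sum>i\<in>A. (a i)\<^sup>2) \<le> real (card V) * (real d * real d powr (1/8))"
        using a4 by (intro mult_left_mono) auto
      finally show ?thesis .
    qed
    then have frac: "real (card (V \<inter> Q)) / real (card V) \<le> u d"
    proof -
      have gen: "C / V \<le> B / t\<^sup>2" if "V > 0" "t > 0" "C * t\<^sup>2 \<le> V * B" for C V B t :: real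
        using that by (simp add: field_simps)
      have "(real d * real d powr (1/8)) / t\<^sup>2 = u d"
        unfolding u_def t_def by (simp add: power_divide power_mult_distrib)
      moreover have "real (card V) > 0" using Vpos by simp
      ultimately show ?thesis using gen[OF _ tpos, of "real (card V)"] \<open>real (card (V \<inter> Q)) * t\<^sup>2 \<le> _\<close>
        by metis
    qed
    have "emeasure (measure_pmf (Pstar d (nat \<lfloor>real d * cd d\<rfloor>) k)) Q
        = ennreal (real (card (V \<inter> Q)) / real (card V))"
      unfolding P using fV Vne by (simp add: measure_pmf.emeasure_eq_measure measure_pmf_of_set)
    also have "\<dots> \<le> ennreal (u d)" using frac by (rule ennreal_leI)
    finally show "emeasure (measure_pmf (Pstar d (nat \<lfloor>real d * cd d\<rfloor>) k))
              {S. \<bar>lambda_kd \<rho> d k x S - c / (1 - \<rho>)\<bar> > \<epsilon>} \<le> ennreal (u d)"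
      unfolding Q_def .
  qed
  have U0: "(\<lambda>d. ennreal (u d)) \<longlonglongrightarrow> 0"
    using tendsto_ennrealI[OF u0] by simp
  show "(\<lambda>d. \<Squnion>x\<in>Fset \<rho> d.
            emeasure (measure_pmf (Pstar d (nat \<lfloor>real d * cd d\<rfloor>) k))
              {S. \<bar>lambda_kd \<rho> d k x S - c / (1 - \<rho>)\<bar> > \<epsilon>}) \<longlonglongrightarrow> 0"
  proof (rule tendsto_sandwich[OF _ _ tendsto_const U0])
    show "eventually (\<lambda>d. 0 \<le> (\<Squnion>x\<in>Fset \<rho> d.
            emeasure (measure_pmf (Pstar d (nat \<lfloor>real d * cd d\<rfloor>) k))
              {S. \<bar>lambda_kd \<rho> d k x S - c / (1 - \<rho>)\<bar> > \<epsilon>})) sequentially" by simp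
    show "eventually (\<lambda>d. (\<Squnion>x\<in>Fset \<rho> d.
            emeasure (measure_pmf (Pstar d (nat \<lfloor>real d * cd d\<rfloor>) k))
              {S. \<bar>lambda_kd \<rho> d k x S - c / (1 - \<rho>)\<bar> > \<epsilon>}) \<le> ennreal (u d)) sequentially"
      using ev by eventually_elim (use bound in blast)
  qed
qed

end
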